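(* Let $\varepsilon>0$, $\delta,\beta\in(0,1)$, let $Q$ be a real-valued graph query, and let $\mathcal M^{\mathrm{edge}}_Q(H,\varepsilon',\delta',\beta')$ be an edge-DP mechanism for $Q$ with error function $\mathrm{Err}^{\mathrm{edge}}_Q$, meaning that for every graph $H$ and parameters, with probability at least $1-\beta'$, $|\mathcal M^{\mathrm{edge}}_Q(H,\varepsilon',\delta',\beta')-Q(H)|\le\mathrm{Err}^{\mathrm{edge}}_Q(H,\varepsilon',\delta',\beta')$. Let the N2E mechanism on input $G$ be: (i) compute $\tau^*$ by the procedure $\mathcal A(G,2\varepsilon/3,\delta/2,2\beta/3)$ below; (ii) set $\overline G=\mathrm{Clip}(G,\tau^* )$; (iii) output $\mathcal M^{\mathrm{edge}}_Q(\overline G,\varepsilon/(6\tau^* ),\delta/(4\tau^* ),\beta/3)$, where $\mathcal A(G,\varepsilon_1,\delta_1,\beta_1)$: set $T=-\frac8{\varepsilon_1}\ln\frac4{\beta_1}$, $\tilde T=T+\mathrm{Lap}(4/\varepsilon_1)$; for $\tau=1,2,4,\dots$ compute $\tilde Q_\tau=Q_{\mathrm{LP\text{-}Del\text{-}N}}(G,\tau)+\mathrm{Lap}(4/\varepsilon_1)$, stop at the first $\tau$ with $\tilde Q_\tau>\tilde T$, and return $\tau^*=3\tau+3|Q_{\mathrm{LP\text{-}Del\text{-}N}}(G,\tau)|+\mathrm{Lap}(6/\varepsilon_1)+\frac6{\varepsilon_1}\ln\max(\frac1{\delta_1},\frac2{\beta_1})+1$. Then for every graph $G$, with probability at least $1-\beta$,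 the output $\mathcal M$ of N2E satisfies $$|\mathcal M-Q(G)|\le|Q(G)-Q(\overline G)|+\mathrm{Err}^{\mathrm{edge}}_Q\big(\overline G,\varepsilon/(6\tau^* ),\delta/(4\tau^* ),\beta/3\big),$$ and $\overline G$ is obtained from $G$ by clipping edges incident to at most $O\big(\log(\log(\deg(G))/\beta)/\varepsilon\big)$ nodes of $G$.
   Context: Graphs are finite, simple, undirected, with nodes from a universe having a fixed total order; edges are ordered lexicographically (lower endpoint first), consistently across graphs. $E(v)$ is the set of edges at $v$; $\deg(G)$ is the maximum degree. Edge-DP: $(\varepsilon,\delta)$-differential privacy where neighboring graphs differ in exactly one edge. $\mathrm{Clip}(G,t)$: for each node $v$ let $E_v^t$ be the edges of $E(v)$ of rank at most $t$ within $E(v)$ in the edge order; $\mathrm{Clip}(G,t)$ has the same nodes and keeps exactly the edges $(a,b)$ in both $E_a^t$ and $E_b^t$. $Q_{\mathrm{LP\text{-}Del\text{-}N}}(G,\tau)$ is the optimal value of the LP: maximize $-\sum_v x_v$ s.t. $y_e\ge1-x_{v'}-x_{v''}$ for each edge $e=(v',v'')$, $\sum_{e\in E(v)}y_e\le\tau$ for each node $v$, $x_v,y_e\in[0,1]$. $\mathrm{Lap}(b)$ has density $\frac1{2b}e^{-|x|/b}$; all random draws are independent. *)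

theory Defs
  imports "HOL-Probability.Probability"
begin

text \<open>Nodes come from a linearly ordered
universe; an edge is stored as the ordered pair (a, b) with a < b (lower endpoint first).\<close>

type_synonym 'v graph = "'v set \<times> ('v \<times> 'v) set"

definition wf_graph :: "('v::linorder) graph \<Rightarrow> bool" where
  "wf_graph G \<longleftrightarrow> finite (fst G) \<and>
     snd G \<subseteq> {(a, b). a \<in> fst G \<and> b \<in> fst G \<and> a < b}"

definition edges_at :: "'v graph \<Rightarrow> 'v \<Rightarrow> ('v \<times> 'v) set" where
  "edges_at G v = {e \<in> snd G. fst e = v \<or> snd e = v}"

definition max_deg :: "'v graph \<Rightarrow> nat" where
  "max_deg G = Max ({0} \<union> (\<lambda>v. card (edges_at G v)) ` fst G)"

definition edge_le :: "('v::linorder \<times> 'v) \<Rightarrow> ('v \<times> 'v) \<Rightarrow> bool" where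
  "edge_le e e' \<longleftrightarrow> fst e < fst e' \<or> (fst e = fst e' \<and> snd e \<le> snd e')"

text \<open>Rank (starting at 1) of edge e within E(v) in the edge order.\<close>
definition edge_rank :: "('v::linorder) graph \<Rightarrow> 'v \<Rightarrow> ('v \<times> 'v) \<Rightarrow> nat" where
  "edge_rank G v e = card {e' \<in> edges_at G v. edge_le e' e}"

definition clip_at :: "('v::linorder) graph \<Rightarrow> real \<Rightarrow> 'v \<Rightarrow> ('v \<times> 'v) set" where
  "clip_at G t v = {e \<in> edges_at G v. real (edge_rank G v e) \<le> t}"

definition Clip :: "('v::linorder) graph \<Rightarrow> real \<Rightarrow> 'v graph" where
  "Clip G t = (fst G, {e \<in> snd G. e \<in> clip_at G t (fst e) \<and> e \<in> clip_at G t (snd e)})"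

definition edge_neighbors :: "'v graph \<Rightarrow> 'v graph \<Rightarrow> bool" where
  "edge_neighbors G H \<longleftrightarrow> fst G = fst H \<and>
     card ((snd G - snd H) \<union> (snd H - snd G)) = 1"

definition lp_feasible ::
  "'v graph \<Rightarrow> real \<Rightarrow> ('v \<Rightarrow> real) \<Rightarrow> ('v \<times> 'v \<Rightarrow> real) \<Rightarrow> bool" where
  "lp_feasible G \<tau> x y \<longleftrightarrow>
     (\<forall>v\<in>fst G. 0 \<le> x v \<and> x v \<le> 1) \<and>
     (\<forall>e\<in>snd G. 0 \<le> y e \<and> y e \<le> 1) \<and>
     (\<forall>e\<in>snd G. y e \<ge> 1 - x (fst e) - x (snd e)) \<and>
     (\<forall>v\<in>fst G. (\<Sum>e\<in>edges_at G v. y e) \<le> \<tau>)"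

definition Q_LP :: "'v graph \<Rightarrow> real \<Rightarrow> real" where
  "Q_LP G \<tau> = Sup {- (\<Sum>v\<in>fst G. x v) | x y. lp_feasible G \<tau> x y}"

definition lap :: "real \<Rightarrow> real measure" where
  "lap b = density lborel (\<lambda>x. ennreal (exp (- \<bar>x\<bar> / b) / (2 * b)))"

text \<open>Noise of procedure A with privacy parameter e1: a sequence nu of independent Lap(4/e1)
draws (nu k is the noise added to Q_LP(G, 2^k)), the noise t0 ~ Lap(4/e1) of the threshold
and the final noise z ~ Lap(6/e1); all independent.\<close>
definition noiseA :: "real \<Rightarrow> ((nat \<Rightarrow> real) \<times> real \<times> real) measure" where
  "noiseA e1 = (\<Pi>\<^sub>M k\<in>(UNIV::nat set). lap (4 / e1)) \<Otimes>\<^sub>M (lap (4 / e1) \<Otimes>\<^sub>M lap (6 / e1))"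

text \<open>Procedure A(G, e1, d1, b1) as a function of its noise. The loop tries tau = 2^k for
k = 0, 1, 2, ... and stops at the first k with noisy value exceeding the noisy threshold.\<close>
definition tauA :: "('v::linorder) graph \<Rightarrow> real \<Rightarrow> real \<Rightarrow> real \<Rightarrow>
    (nat \<Rightarrow> real) \<times> real \<times> real \<Rightarrow> real" where
  "tauA G e1 d1 b1 \<omega> =
     (let \<nu> = fst \<omega>; t0 = fst (snd \<omega>); z = snd (snd \<omega>);
          T = - (8 / e1) * ln (4 / b1);
          Tt = T + t0;
          k = (LEAST k. Q_LP G (2 ^ k) + \<nu> k > Tt);
          \<tau> = (2::real) ^ k
      in 3 * \<tau> + 3 * \<bar>Q_LP G \<tau>\<bar> + z + (6 / e1) * ln (max (1 / d1) (2 / b1)) + 1)"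

definition tau_star :: "('v::linorder) graph \<Rightarrow> real \<Rightarrow> real \<Rightarrow> real \<Rightarrow>
    (nat \<Rightarrow> real) \<times> real \<times> real \<Rightarrow> real" where
  "tau_star G \<epsilon> \<delta> \<beta> \<omega> = tauA G (2 * \<epsilon> / 3) (\<delta> / 2) (2 * \<beta> / 3) \<omega>"

text \<open>The edge mechanism Medge is a
family of output distributions (Markov kernel) drawn independently of the noise of A; the
probability is the composition (integral of the kernel's probability against the noise
distribution; nn_integral is the lower integral, so no measurability is presupposed).\<close>
definition n2e_prob ::
  "(('v::linorder) graph \<Rightarrow> real \<Rightarrow> real \<Rightarrow> real \<Rightarrow> real measure) \<Rightarrow>
   'v graph \<Rightarrow> real \<Rightarrow> real \<Rightarrow> real \<Rightarrow>
   ('v graph \<Rightarrow> real \<Rightarrow> real \<Rightarrow> bool) \<Rightarrow> ennreal" where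
  "n2e_prob Medge G \<epsilon> \<delta> \<beta> P =
     (\<integral>\<^sup>+ \<omega>. (let t = tau_star G \<epsilon> \<delta> \<beta> \<omega>; Gb = Clip G t in
        emeasure (Medge Gb (\<epsilon> / (6 * t)) (\<delta> / (4 * t)) (\<beta> / 3)) {m. P Gb t m})
      \<partial>noiseA (2 * \<epsilon> / 3))"

definition clipped_at_most :: "'v graph \<Rightarrow> 'v graph \<Rightarrow> real \<Rightarrow> bool" where
  "clipped_at_most G Gb k \<longleftrightarrow> (\<exists>S\<subseteq>fst G. real (card S) \<le> k \<and>
     (\<forall>e\<in>snd G - snd Gb. fst e \<in> S \<or> snd e \<in> S))"

end

theory Submission
  imports Defs "HOL-Real_Asymp.Real_Asymp"
begin


lemma lap_sets[simp, measurable_cong]: "sets (lap b) = sets borel"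
  by (simp add: lap_def)

lemma lap_space[simp]: "space (lap b) = UNIV"
  by (simp add: lap_def)

lemma lap_ge:
  assumes b: "0 < b" and a: "0 \<le> a"
  shows "emeasure (lap b) {a..} = ennreal (exp (- a / b) / 2)"
proof -
  have "emeasure (lap b) {a..} = (\<integral>\<^sup>+ x. ennreal (exp (- \<bar>x\<bar> / b) / (2 * b)) * indicator {a..} x \<partial>lborel)"
    unfolding lap_def by (subst emeasure_density) auto
  also have "\<dots> = (\<integral>\<^sup>+ x. ennreal (exp (- x / b) / (2 * b)) * indicator {a..} x \<partial>lborel)"
    using a by (intro nn_integral_cong) (auto split: split_indicator)
  also have "\<dots> = ennreal (0 - (- exp (- a / b) / 2))"
  proof (rule nn_integral_FTC_atLeast)
    show "(\<lambda>x. exp (- x / b) / (2 * b)) \<in> borel_measurable borel" by measurable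
    fix x :: real
    show "((\<lambda>x. - exp (- x / b) / 2) has_real_derivative exp (- x / b) / (2 * b)) (at x)"
      using b by (auto intro!: derivative_eq_intros simp: field_simps)
    show "0 \<le> exp (- x / b) / (2 * b)" using b by simp
  next
    show "((\<lambda>x. - exp (- x / b) / 2) \<longlongrightarrow> 0) at_top" using b by real_asymp
  qed
  finally show ?thesis by simp
qed

lemma lap_nn_integral_sym:
  "(\<integral>\<^sup>+ x. ennreal (exp (- \<bar>x\<bar> / b) / (2 * b)) * indicator {..-a} x \<partial>lborel) =
   (\<integral>\<^sup>+ x. ennreal (exp (- \<bar>x\<bar> / b) / (2 * b)) * indicator {a..} x \<partial>lborel)"
  by (subst nn_integral_real_affine[where c="-1" and t=0]) (auto intro!: nn_integral_cong split: split_indicator)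

lemma lap_le:
  assumes b: "0 < b" and a: "0 \<le> a"
  shows "emeasure (lap b) {..-a} = ennreal (exp (- a / b) / 2)"
proof -
  have "emeasure (lap b) {..-a} = (\<integral>\<^sup>+ x. ennreal (exp (- \<bar>x\<bar> / b) / (2 * b)) * indicator {..-a} x \<partial>lborel)"
    unfolding lap_def by (subst emeasure_density) auto
  also have "\<dots> = (\<integral>\<^sup>+ x. ennreal (exp (- \<bar>x\<bar> / b) / (2 * b)) * indicator {a..} x \<partial>lborel)"
    by (rule lap_nn_integral_sym)
  also have "\<dots> = emeasure (lap b) {a..}"
    unfolding lap_def by (subst emeasure_density) auto
  finally show ?thesis using lap_ge[OF b a] by simp
qed

lemma prob_space_lap:
  assumes b: "0 < b"
  shows "prob_space (lap b)"
proof (rule prob_spaceI)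
  let ?g = "\<lambda>x::real. ennreal (exp (- \<bar>x\<bar> / b) / (2 * b))"
  have "emeasure (lap b) (space (lap b)) = (\<integral>\<^sup>+ x. ?g x \<partial>lborel)"
    unfolding lap_def by (subst emeasure_density) auto
  also have "\<dots> = (\<integral>\<^sup>+ x. ?g x * indicator {0..} x + ?g x * indicator {..<0} x \<partial>lborel)"
    by (intro nn_integral_cong) (auto split: split_indicator)
  also have "\<dots> = (\<integral>\<^sup>+ x. ?g x * indicator {0..} x \<partial>lborel) + (\<integral>\<^sup>+ x. ?g x * indicator {..<0} x \<partial>lborel)"
    by (rule nn_integral_add) auto
  also have "(\<integral>\<^sup>+ x. ?g x * indicator {..<0} x \<partial>lborel) = (\<integral>\<^sup>+ x. ?g x * indicator {..-0} x \<partial>lborel)"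
    by (intro nn_integral_cong_AE) (use AE_lborel_singleton[of "0::real"] in \<open>auto split: split_indicator\<close>)
  also have "\<dots> = (\<integral>\<^sup>+ x. ?g x * indicator {0..} x \<partial>lborel)"
    by (rule lap_nn_integral_sym)
  also have "(\<integral>\<^sup>+ x. ?g x * indicator {0..} x \<partial>lborel) = emeasure (lap b) {0..}"
    unfolding lap_def by (subst emeasure_density) auto
  also have "\<dots> = ennreal (1/2)" using lap_ge[OF b, of 0] by simp
  also have "ennreal (1/2) + ennreal (1/2) = ennreal (1/2 + 1/2)"
    by (rule ennreal_plus[symmetric]) auto
  finally show "emeasure (lap b) (space (lap b)) = 1"
    by simp
qed

lemma space_noiseA[simp]: "space (noiseA e1) = UNIV"
  by (simp add: noiseA_def space_pair_measure space_PiM)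

lemma prob_space_noiseA:
  assumes "0 < e1" shows "prob_space (noiseA e1)"
  unfolding noiseA_def using assms
  by (intro prob_space_pair prob_space_PiM prob_space_lap) (auto simp: prob_space_pair)

lemma pair_fst_emeasure:
  assumes "prob_space M2" "A \<in> sets M1" "prob_space M1"
  shows "emeasure (M1 \<Otimes>\<^sub>M M2) {\<omega>\<in>space (M1 \<Otimes>\<^sub>M M2). fst \<omega> \<in> A} = emeasure M1 A"
proof -
  have "{\<omega>\<in>space (M1 \<Otimes>\<^sub>M M2). fst \<omega> \<in> A} = A \<times> space M2"
    using sets.sets_into_space[OF assms(2)] by (auto simp: space_pair_measure)
  then show ?thesis using assms
    by (simp add: sigma_finite_measure.emeasure_pair_measure_Times prob_space_imp_sigma_finite prob_space.emeasure_space_1)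
qed

lemma pair_snd_emeasure:
  assumes "prob_space M1" "A \<in> sets M2" "prob_space M2"
  shows "emeasure (M1 \<Otimes>\<^sub>M M2) {\<omega>\<in>space (M1 \<Otimes>\<^sub>M M2). snd \<omega> \<in> A} = emeasure M2 A"
proof -
  have "{\<omega>\<in>space (M1 \<Otimes>\<^sub>M M2). snd \<omega> \<in> A} = space M1 \<times> A"
    using sets.sets_into_space[OF assms(2)] by (auto simp: space_pair_measure)
  then show ?thesis using assms
    by (simp add: sigma_finite_measure.emeasure_pair_measure_Times prob_space_imp_sigma_finite prob_space.emeasure_space_1)
qed

lemma PiM_comp_emeasure:
  assumes "\<And>i. prob_space (M i)" "A \<in> sets (M k)"
  shows "emeasure (PiM UNIV M) {\<omega>\<in>space (PiM UNIV M). \<omega> k \<in> A} = emeasure (M k) A"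
proof -
  have "emeasure (M k) A = emeasure (distr (Pi\<^sub>M UNIV M) (M k) (\<lambda>\<omega>. \<omega> k)) A"
    using distr_PiM_component[of UNIV M k] assms by simp
  also have "\<dots> = emeasure (PiM UNIV M) ((\<lambda>\<omega>. \<omega> k) -` A \<inter> space (PiM UNIV M))"
    using assms by (subst emeasure_distr) auto
  finally show ?thesis by (simp add: Int_def conj_commute)
qed

lemma noise_nu:
  assumes e1: "0 < e1" and A: "A \<in> sets borel"
  shows "emeasure (noiseA e1) {\<omega>. fst \<omega> k \<in> A} = emeasure (lap (4 / e1)) A"
proof -
  let ?P = "PiM (UNIV::nat set) (\<lambda>k. lap (4 / e1))"
  have ps: "prob_space (lap (4/e1) \<Otimes>\<^sub>M lap (6/e1))"
    using e1 by (intro prob_space_pair prob_space_lap) (auto simp: prob_space_pair)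
  have Aset: "{\<omega>\<in>space ?P. \<omega> k \<in> A} \<in> sets ?P"
    using A by measurable
  have "{\<omega>. fst \<omega> k \<in> A} = {\<omega>\<in>space (noiseA e1). fst \<omega> \<in> {\<omega>\<in>space ?P. \<omega> k \<in> A}}"
    by (auto simp: space_PiM)
  also have "emeasure (noiseA e1) \<dots> = emeasure ?P {\<omega>\<in>space ?P. \<omega> k \<in> A}"
    unfolding noiseA_def using e1 by (intro pair_fst_emeasure[OF ps Aset] prob_space_PiM prob_space_lap) auto
  also have "\<dots> = emeasure (lap (4 / e1)) A"
    using e1 A by (intro PiM_comp_emeasure prob_space_lap) auto
  finally show ?thesis .
qed

lemma noise_t0:
  assumes e1: "0 < e1" and A: "A \<in> sets borel"
  shows "emeasure (noiseA e1) {\<omega>. fst (snd \<omega>) \<in> A} = emeasure (lap (4 / e1)) A"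
proof -
  let ?P = "PiM (UNIV::nat set) (\<lambda>k. lap (4 / e1))"
  let ?R = "lap (4/e1) \<Otimes>\<^sub>M lap (6/e1)"
  have ps: "prob_space ?P"
    using e1 by (intro prob_space_PiM prob_space_lap) auto
  have Aset: "{\<omega>\<in>space ?R. fst \<omega> \<in> A} \<in> sets ?R"
    using A by measurable
  have "{\<omega>. fst (snd \<omega>) \<in> A} = {\<omega>\<in>space (noiseA e1). snd \<omega> \<in> {\<omega>\<in>space ?R. fst \<omega> \<in> A}}"
    by (auto simp: space_pair_measure)
  also have "emeasure (noiseA e1) \<dots> = emeasure ?R {\<omega>\<in>space ?R. fst \<omega> \<in> A}"
    unfolding noiseA_def using e1 by (intro pair_snd_emeasure[OF ps Aset] prob_space_pair prob_space_lap) (auto simp: prob_space_pair)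
  also have "\<dots> = emeasure (lap (4 / e1)) A"
    using e1 A by (intro pair_fst_emeasure prob_space_lap) (auto simp: prob_space_pair)
  finally show ?thesis .
qed

lemma noise_z:
  assumes e1: "0 < e1" and A: "A \<in> sets borel"
  shows "emeasure (noiseA e1) {\<omega>. snd (snd \<omega>) \<in> A} = emeasure (lap (6 / e1)) A"
proof -
  let ?P = "PiM (UNIV::nat set) (\<lambda>k. lap (4 / e1))"
  let ?R = "lap (4/e1) \<Otimes>\<^sub>M lap (6/e1)"
  have ps: "prob_space ?P"
    using e1 by (intro prob_space_PiM prob_space_lap) auto
  have Aset: "{\<omega>\<in>space ?R. snd \<omega> \<in> A} \<in> sets ?R"
    using A by measurable
  have "{\<omega>. snd (snd \<omega>) \<in> A} = {\<omega>\<in>space (noiseA e1). snd \<omega> \<in> {\<omega>\<in>space ?R. snd \<omega> \<in> A}}"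
    by (auto simp: space_pair_measure)
  also have "emeasure (noiseA e1) \<dots> = emeasure ?R {\<omega>\<in>space ?R. snd \<omega> \<in> A}"
    unfolding noiseA_def using e1 by (intro pair_snd_emeasure[OF ps Aset] prob_space_pair prob_space_lap) (auto simp: prob_space_pair)
  also have "\<dots> = emeasure (lap (6 / e1)) A"
    using e1 A by (intro pair_snd_emeasure prob_space_lap) (auto simp: prob_space_pair)
  finally show ?thesis .
qed



lemma wf_finite_edges: "wf_graph G \<Longrightarrow> finite (snd G)"
  unfolding wf_graph_def
  by (rule finite_subset[of _ "fst G \<times> fst G"]) auto

lemma wf_finite_edges_at: "wf_graph G \<Longrightarrow> finite (edges_at G v)"
  unfolding edges_at_def using wf_finite_edges[of G] by auto

lemma edges_at_le_max_deg: "wf_graph G \<Longrightarrow> v \<in> fst G \<Longrightarrow> card (edges_at G v) \<le> max_deg G"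
  unfolding max_deg_def wf_graph_def by (intro Max_ge) auto

definition lpset :: "'v graph \<Rightarrow> real \<Rightarrow> real set" where
  "lpset G \<tau> = {- (\<Sum>v\<in>fst G. x v) | x y. lp_feasible G \<tau> x y}"

lemma Q_LP_lpset: "Q_LP G \<tau> = Sup (lpset G \<tau>)"
  by (simp add: Q_LP_def lpset_def)

lemma lpset_le0: "r \<in> lpset G \<tau> \<Longrightarrow> r \<le> 0"
  unfolding lpset_def lp_feasible_def by (auto intro!: sum_nonneg)

lemma lpset_ne: "0 \<le> \<tau> \<Longrightarrow> lpset G \<tau> \<noteq> {}"
proof -
  assume t: "0 \<le> \<tau>"
  have "lp_feasible G \<tau> (\<lambda>_. 1) (\<lambda>_. 0)" using t unfolding lp_feasible_def by auto
  then show ?thesis unfolding lpset_def by blast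
qed

lemma Q_LP_le0: "0 \<le> \<tau> \<Longrightarrow> Q_LP G \<tau> \<le> 0"
  unfolding Q_LP_lpset using lpset_ne lpset_le0 by (metis cSup_least)

lemma Q_LP_approx:
  assumes "0 \<le> \<tau>" "0 < \<eta>"
  obtains x y where "lp_feasible G \<tau> x y" "Q_LP G \<tau> - \<eta> < - (\<Sum>v\<in>fst G. x v)"
proof -
  have bdd: "bdd_above (lpset G \<tau>)" using lpset_le0[of _ G \<tau>] by (intro bdd_aboveI[where M=0]) auto
  have "Q_LP G \<tau> - \<eta> < Sup (lpset G \<tau>)" using assms unfolding Q_LP_lpset by simp
  then obtain r where "r \<in> lpset G \<tau>" "Q_LP G \<tau> - \<eta> < r"
    using less_cSupE[OF _ lpset_ne[OF assms(1)]] by blast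
  then show ?thesis using that unfolding lpset_def by blast
qed

lemma Q_LP_zero:
  assumes "\<And>v. v \<in> fst G \<Longrightarrow> real (card (edges_at G v)) \<le> \<tau>"
  shows "Q_LP G \<tau> = 0"
proof -
  have "lp_feasible G \<tau> (\<lambda>_. 0) (\<lambda>_. 1)" using assms unfolding lp_feasible_def by auto
  then have "0 \<in> lpset G \<tau>" unfolding lpset_def by force
  then show ?thesis unfolding Q_LP_lpset using lpset_le0[of _ G \<tau>]
    by (intro cSup_eq_maximum) auto
qed

definition oth :: "'v \<Rightarrow> 'v \<times> 'v \<Rightarrow> 'v" where
  "oth v e = (if fst e = v then snd e else fst e)"

lemma oth_inj:
  assumes "wf_graph G" shows "inj_on (oth v) (edges_at G v)"
proof
  fix e e' assume e: "e \<in> edges_at G v" and e': "e' \<in> edges_at G v" and eq: "oth v e = oth v e'"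
  have lt: "fst e < snd e" "fst e' < snd e'"
    using assms e e' unfolding wf_graph_def edges_at_def by auto
  show "e = e'"
    using e e' eq lt unfolding edges_at_def oth_def
    by (cases e, cases e') (auto split: if_splits)
qed

lemma oth_in: "wf_graph G \<Longrightarrow> e \<in> edges_at G v \<Longrightarrow> oth v e \<in> fst G"
  unfolding wf_graph_def edges_at_def oth_def by auto

lemma lp_clip:
  assumes wf: "wf_graph G" and t0: "0 \<le> \<tau>"
    and tt: "3 * \<tau> + 3 * \<bar>Q_LP G \<tau>\<bar> + 1 \<le> t"
  shows "real (card {v \<in> fst G. t < real (card (edges_at G v))}) \<le> 3 * \<bar>Q_LP G \<tau>\<bar>"
proof -
  define q where "q = - Q_LP G \<tau>"
  have q0: "0 \<le> q" using Q_LP_le0[OF t0] q_def by simp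
  have absq: "\<bar>Q_LP G \<tau>\<bar> = q" using q0 q_def by simp
  define S where "S = {v \<in> fst G. t < real (card (edges_at G v))}"
  have finV: "finite (fst G)" using wf unfolding wf_graph_def by blast
  have main: "real (card S) \<le> 3 * q + 3 * \<eta>" if eta: "0 < \<eta>" "\<eta> \<le> 2/3" for \<eta>
  proof -
    obtain x y where f: "lp_feasible G \<tau> x y" and sx: "Q_LP G \<tau> - \<eta> < - (\<Sum>v\<in>fst G. x v)"
      using Q_LP_approx[OF t0 eta(1)] by blast
    have sxq: "(\<Sum>v\<in>fst G. x v) < q + \<eta>" using sx q_def by simp
    have x0: "\<And>v. v \<in> fst G \<Longrightarrow> 0 \<le> x v" using f unfolding lp_feasible_def by auto
    have big: "1/3 < x v" if v: "v \<in> S" for v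
    proof (rule ccontr)
      assume "\<not> 1/3 < x v"
      then have xv: "x v \<le> 1/3" by simp
      have vV: "v \<in> fst G" using v S_def by auto
      have ye: "2/3 - x (oth v e) \<le> y e" if e: "e \<in> edges_at G v" for e
      proof -
        have "e \<in> snd G" using e unfolding edges_at_def by auto
        then have "y e \<ge> 1 - x (fst e) - x (snd e)" using f unfolding lp_feasible_def by auto
        then show ?thesis using e xv unfolding edges_at_def oth_def by (auto split: if_splits)
      qed
      have "(\<Sum>e\<in>edges_at G v. 2/3 - x (oth v e)) \<le> (\<Sum>e\<in>edges_at G v. y e)"
        by (rule sum_mono) (use ye in auto)
      also have "\<dots> \<le> \<tau>" using f vV unfolding lp_feasible_def by auto
      finally have A: "2/3 * real (card (edges_at G v)) - (\<Sum>e\<in>edges_at G v. x (oth v e)) \<le> \<tau>"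
        by (simp add: sum_subtractf)
      have "(\<Sum>e\<in>edges_at G v. x (oth v e)) = (\<Sum>u\<in>oth v ` edges_at G v. x u)"
        using sum.reindex[OF oth_inj[OF wf, of v], of x] by simp
      also have "\<dots> \<le> (\<Sum>u\<in>fst G. x u)"
        using oth_in[OF wf] x0 finV by (intro sum_mono2) auto
      finally have B: "(\<Sum>e\<in>edges_at G v. x (oth v e)) < q + \<eta>" using sxq by simp
      have C: "t < real (card (edges_at G v))" using v S_def by auto
      show False using A B C tt absq t0 q0 eta by linarith
    qed
    have "real (card S) * (1/3) \<le> (\<Sum>v\<in>S. x v)"
      using big sum_mono[of S "\<lambda>_. 1/3" x] by (simp add: less_imp_le)
    also have "\<dots> \<le> (\<Sum>v\<in>fst G. x v)"
      using x0 finV by (intro sum_mono2) (auto simp: S_def)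
    finally show ?thesis using sxq by linarith
  qed
  have "real (card S) \<le> 3 * q"
  proof (rule field_le_epsilon)
    fix e :: real assume e: "0 < e"
    show "real (card S) \<le> 3 * q + e"
    proof (cases "e \<le> 2")
      case True then show ?thesis using main[of "e/3"] e by simp
    next
      case False then show ?thesis using main[of "2/3"] e by simp
    qed
  qed
  then show ?thesis using absq S_def by simp
qed

lemma clip_removed:
  assumes wf: "wf_graph G" and e: "e \<in> snd G - snd (Clip G t)"
  shows "t < real (card (edges_at G (fst e))) \<or> t < real (card (edges_at G (snd e)))"
proof -
  have eG: "e \<in> snd G" using e by auto
  have ea: "e \<in> edges_at G (fst e)" "e \<in> edges_at G (snd e)" using eG by (auto simp: edges_at_def)
  have rk: "edge_rank G v e \<le> card (edges_at G v)" for v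
    unfolding edge_rank_def using wf_finite_edges_at[OF wf] by (intro card_mono) auto
  have "e \<notin> clip_at G t (fst e) \<or> e \<notin> clip_at G t (snd e)" using e eG by (auto simp: Clip_def)
  then have "t < real (edge_rank G (fst e) e) \<or> t < real (edge_rank G (snd e) e)"
    using ea unfolding clip_at_def by auto
  then show ?thesis using rk[of "fst e"] rk[of "snd e"] by (meson less_le_trans of_nat_le_iff)
qed

lemma wf_Clip: "wf_graph G \<Longrightarrow> wf_graph (Clip G t)"
  unfolding wf_graph_def Clip_def by auto



lemma const_bound:
  fixes \<epsilon> \<beta> Dr :: real and K :: nat
  assumes eps: "0 < \<epsilon>" and b: "0 < \<beta>" "\<beta> < 1" and D4: "4 \<le> Dr"
    and K1: "1 \<le> K" and KD: "(2::real) ^ (K - 1) < Dr"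
  shows "3 * (3 * ((6/\<epsilon>) * ln (6/\<beta>)) + (6/\<epsilon>) * ln (12 * (real K + 1) / \<beta>))
         \<le> 6000 * ln (ln (max Dr (exp 1)) / \<beta>) / \<epsilon>"
proof -
  define L where "L = ln Dr"
  have mx: "max Dr (exp 1) = Dr" using exp_le D4 by simp
  have ln2: "2/3 \<le> ln (2::real)" by (rule ln2_ge_two_thirds)
  have ln4: "ln (4::real) = 2 * ln 2"
    using ln_mult[of 2 2] by simp
  have L4: "4/3 \<le> L" unfolding L_def
    using ln4 ln2 ln_le_cancel_iff[of 4 Dr] D4 by simp
  have lnL: "1/4 \<le> ln L"
  proof -
    have "ln (1/L) \<le> 1/L - 1" using L4 by (intro ln_le_minus_one) simp
    moreover have "ln (1/L) = - ln L" using L4 by (simp add: ln_div)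
    moreover have "1/L \<le> 3/4" using L4 by (simp add: field_simps)
    ultimately show ?thesis by linarith
  qed
  define u where "u = - ln \<beta>"
  have u0: "0 \<le> u" using b u_def by simp
  have X: "ln (L / \<beta>) = ln L + u" using L4 b by (simp add: ln_div u_def)
  have "ln ((2::real) ^ (K - 1)) < ln Dr" using KD D4 by (intro ln_less_cancel_iff[THEN iffD2]) auto
  then have "real (K - 1) * ln 2 < L" by (simp add: ln_realpow L_def)
  then have "real (K - 1) * (2/3) < L" using ln2 by (smt (verit) mult_left_mono of_nat_0_le_iff)
  then have K4: "real K + 1 \<le> 4 * L" using K1 L4 by (simp add: of_nat_diff)
  have A: "ln (6/\<beta>) \<le> 5 + u"
  proof -
    have "ln (6/\<beta>) = ln 6 + u" using b by (simp add: ln_div u_def)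
    moreover have "ln (6::real) \<le> 5" using ln_le_minus_one[of 6] by simp
    ultimately show ?thesis by simp
  qed
  have B: "ln (12 * (real K + 1) / \<beta>) \<le> 47 + ln L + u"
  proof -
    have "ln (12 * (real K + 1) / \<beta>) \<le> ln (48 * L / \<beta>)"
      using K4 b by (intro ln_mono) (auto simp: divide_right_mono)
    also have "\<dots> = ln 48 + ln L + u" using b L4 by (simp add: ln_div ln_mult u_def)
    also have "ln (48::real) \<le> 47" using ln_le_minus_one[of 48] by simp
    finally show ?thesis by simp
  qed
  have "54 * ln (6/\<beta>) + 18 * ln (12 * (real K + 1) / \<beta>) \<le> 6000 * ln (L / \<beta>)"
    using A B X lnL u0 by linarith
  then have "(54 * ln (6/\<beta>) + 18 * ln (12 * (real K + 1) / \<beta>)) / \<epsilon> \<le> 6000 * ln (L / \<beta>) / \<epsilon>"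
    using eps by (intro divide_right_mono) auto
  moreover have "3 * (3 * ((6/\<epsilon>) * ln (6/\<beta>)) + (6/\<epsilon>) * ln (12 * (real K + 1) / \<beta>))
     = (54 * ln (6/\<beta>) + 18 * ln (12 * (real K + 1) / \<beta>)) / \<epsilon>"
    by (simp add: field_simps add_divide_distrib)
  ultimately show ?thesis using mx by (simp add: L_def)
qed



lemma lap_ge_m: "0 < b \<Longrightarrow> 0 \<le> a \<Longrightarrow> measure (lap b) {a..} = exp (- a / b) / 2"
  using lap_ge by (simp add: measure_def)
lemma lap_le_m: "0 < b \<Longrightarrow> 0 \<le> a \<Longrightarrow> measure (lap b) {..-a} = exp (- a / b) / 2"
  using lap_le by (simp add: measure_def)

lemma noise_nu_m: "0 < e1 \<Longrightarrow> A \<in> sets borel \<Longrightarrow> measure (noiseA e1) {\<omega>. fst \<omega> k \<in> A} = measure (lap (4 / e1)) A"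
  using noise_nu by (simp add: measure_def)
lemma noise_t0_m: "0 < e1 \<Longrightarrow> A \<in> sets borel \<Longrightarrow> measure (noiseA e1) {\<omega>. fst (snd \<omega>) \<in> A} = measure (lap (4 / e1)) A"
  using noise_t0 by (simp add: measure_def)
lemma noise_z_m: "0 < e1 \<Longrightarrow> A \<in> sets borel \<Longrightarrow> measure (noiseA e1) {\<omega>. snd (snd \<omega>) \<in> A} = measure (lap (6 / e1)) A"
  using noise_z by (simp add: measure_def)

lemma exp_neg_ln: "0 < (x::real) \<Longrightarrow> exp (- ln x) = 1 / x"
  by (simp add: exp_minus inverse_eq_divide)

lemma sets_test:
  fixes la lb lz :: real
  shows "{\<omega>. fst (snd \<omega>) < lb \<and> -lb < fst (snd \<omega>) \<and> -lb < fst \<omega> K \<and> (\<forall>k. k \<le> K \<longrightarrow> fst \<omega> k < la) \<and> -lz < snd (snd \<omega>)} \<in> sets (noiseA e1)"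
proof -
  have "{\<omega>\<in>space (noiseA e1). fst (snd \<omega>) < lb \<and> -lb < fst (snd \<omega>) \<and> -lb < fst \<omega> K \<and> (\<forall>k. k \<le> K \<longrightarrow> fst \<omega> k < la) \<and> -lz < snd (snd \<omega>)} \<in> sets (noiseA e1)"
    unfolding noiseA_def by measurable
  then show ?thesis by simp
qed

lemma main_bound:
  fixes Q :: "('v::linorder) graph \<Rightarrow> real"
    and Medge :: "'v graph \<Rightarrow> real \<Rightarrow> real \<Rightarrow> real \<Rightarrow> real measure"
    and Err :: "'v graph \<Rightarrow> real \<Rightarrow> real \<Rightarrow> real \<Rightarrow> real"
    and \<epsilon> \<delta> \<beta> :: real and G :: "'v graph"
  assumes eps: "\<epsilon> > 0" and dd: "0 < \<delta>" "\<delta> < 1" and bb: "0 < \<beta>" "\<beta> < 1" and wf: "wf_graph G"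
    and Mps: "\<forall>H e d b. wf_graph H \<longrightarrow>
        prob_space (Medge H e d b) \<and> sets (Medge H e d b) = sets borel"
    and acc: "\<forall>H e d b. wf_graph H \<and> e > 0 \<and> d > 0 \<and> b > 0 \<longrightarrow>
        measure (Medge H e d b) {m. \<bar>m - Q H\<bar> \<le> Err H e d b} \<ge> 1 - b"
  shows "ennreal (1 - \<beta>) \<le> n2e_prob Medge G \<epsilon> \<delta> \<beta>
       (\<lambda>Gb t m. \<bar>m - Q G\<bar> \<le> \<bar>Q G - Q Gb\<bar> + Err Gb (\<epsilon> / (6 * t)) (\<delta> / (4 * t)) (\<beta> / 3) \<and>
          clipped_at_most G Gb
            (6000 * ln (ln (max (real (max_deg G)) (exp 1)) / \<beta>) / \<epsilon>))"
proof -
  define e1 where "e1 = 2 * \<epsilon> / 3"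
  define b1 where "b1 = 2 * \<beta> / 3"
  define d1 where "d1 = \<delta> / 2"
  define b where "b = 4 / e1"
  define c where "c = 6 / e1"
  define D where "D = max_deg G"
  define K where "K = (LEAST K. real D \<le> (2::real) ^ K)"
  define lb where "lb = b * ln (4 / b1)"
  define la where "la = b * ln (8 * (real K + 1) / b1)"
  define lz where "lz = c * ln (2 / b1)"
  define Cb where "Cb = 6000 * ln (ln (max (real (max_deg G)) (exp 1)) / \<beta>) / \<epsilon>"
  define E :: "((nat \<Rightarrow> real) \<times> real \<times> real) set" where "E = {\<omega>. fst (snd \<omega>) < lb \<and> -lb < fst (snd \<omega>) \<and> -lb < fst \<omega> K \<and>
     (\<forall>k. k \<le> K \<longrightarrow> fst \<omega> k < la) \<and> -lz < snd (snd \<omega>)}"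
  have e1p: "0 < e1" using eps e1_def by simp
  have bp: "0 < b" using e1p b_def by simp
  have cp: "0 < c" using e1p c_def by simp
  have b1p: "0 < b1" "b1 < 1" using bb b1_def by auto
  have d1p: "0 < d1" using dd d1_def by auto
  have lb0: "0 \<le> lb" unfolding lb_def using bp b1p by (intro mult_nonneg_nonneg ln_ge_zero) auto
  have la0: "0 \<le> la" unfolding la_def using bp b1p by (intro mult_nonneg_nonneg ln_ge_zero) auto
  have lz0: "0 \<le> lz" unfolding lz_def using cp b1p by (intro mult_nonneg_nonneg ln_ge_zero) auto
  have exK: "\<exists>K. real D \<le> (2::real) ^ K"
  proof
    have "D < 2 ^ D" by (rule less_exp)
    then show "real D \<le> (2::real) ^ D" by (metis less_imp_le of_nat_le_iff of_nat_numeral of_nat_power)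
  qed
  have KD: "real D \<le> (2::real) ^ K" unfolding K_def using exK by (rule LeastI_ex)
  have degK: "\<And>v. v \<in> fst G \<Longrightarrow> real (card (edges_at G v)) \<le> (2::real) ^ K"
  proof -
    fix v assume "v \<in> fst G"
    then have "real (card (edges_at G v)) \<le> real D" using edges_at_le_max_deg[OF wf] D_def by simp
    then show "real (card (edges_at G v)) \<le> (2::real) ^ K" using KD by linarith
  qed
  have Q0: "Q_LP G (2 ^ K) = 0" by (rule Q_LP_zero) (use degK in auto)
  have Cb0: "0 \<le> Cb"
  proof -
    have "1 \<le> ln (max (real (max_deg G)) (exp 1))"
      by (metis exp_gt_zero ln_exp ln_le_cancel_iff max.cobounded2 max.strict_coboundedI2)
    then have "1 \<le> ln (max (real (max_deg G)) (exp 1)) / \<beta>" using bb by (simp add: le_divide_eq)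
    then show ?thesis unfolding Cb_def using eps by (intro divide_nonneg_pos mult_nonneg_nonneg ln_ge_zero) auto
  qed
  interpret N: prob_space "noiseA e1" using prob_space_noiseA[OF e1p] .
  have Eset: "E \<in> sets (noiseA e1)" unfolding E_def by (rule sets_test)
  have mset: "{\<omega>. f \<omega> \<in> A} \<in> sets (noiseA e1)"
    if "f \<in> borel_measurable (noiseA e1)" "A \<in> sets borel" for f :: "_ \<Rightarrow> real" and A
  proof -
    have "f -` A \<inter> space (noiseA e1) \<in> sets (noiseA e1)" using that by (rule measurable_sets)
    then show ?thesis by (simp add: vimage_def)
  qed
  have m1: "(\<lambda>\<omega>. fst (snd \<omega>)) \<in> borel_measurable (noiseA e1)" unfolding noiseA_def by measurable
  have m2: "(\<lambda>\<omega>. snd (snd \<omega>)) \<in> borel_measurable (noiseA e1)" unfolding noiseA_def by measurable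
  have m3: "(\<lambda>\<omega>. fst \<omega> k) \<in> borel_measurable (noiseA e1)" for k unfolding noiseA_def by measurable
  define F1 :: "((nat \<Rightarrow> real) \<times> real \<times> real) set" where "F1 = {\<omega>. fst (snd \<omega>) \<in> {lb..}}"
  define F2 :: "((nat \<Rightarrow> real) \<times> real \<times> real) set" where "F2 = {\<omega>. fst (snd \<omega>) \<in> {..-lb}}"
  define F3 :: "((nat \<Rightarrow> real) \<times> real \<times> real) set" where "F3 = {\<omega>. fst \<omega> K \<in> {..-lb}}"
  define F4 :: "nat \<Rightarrow> ((nat \<Rightarrow> real) \<times> real \<times> real) set" where "F4 = (\<lambda>k. {\<omega>. fst \<omega> k \<in> {la..}})"
  define F5 :: "((nat \<Rightarrow> real) \<times> real \<times> real) set" where "F5 = {\<omega>. snd (snd \<omega>) \<in> {..-lz}}"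
  have F1s: "F1 \<in> sets (noiseA e1)" unfolding F1_def by (intro mset m1) auto
  have F2s: "F2 \<in> sets (noiseA e1)" unfolding F2_def by (intro mset m1) auto
  have F3s: "F3 \<in> sets (noiseA e1)" unfolding F3_def by (intro mset m3) auto
  have F4s: "F4 k \<in> sets (noiseA e1)" for k unfolding F4_def by (intro mset m3) auto
  have F5s: "F5 \<in> sets (noiseA e1)" unfolding F5_def by (intro mset m2) auto
  have lbb: "exp (- lb / b) = b1 / 4" unfolding lb_def using bp b1p by (simp add: exp_neg_ln)
  have lab: "exp (- la / b) = b1 / (8 * (real K + 1))" unfolding la_def using bp b1p by (simp add: exp_neg_ln)
  have lzc: "exp (- lz / c) = b1 / 2" unfolding lz_def using cp b1p by (simp add: exp_neg_ln)
  have P1: "N.prob F1 = b1 / 8" unfolding F1_def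
    using noise_t0_m[OF e1p, of "{lb..}"] lap_ge_m[of "4/e1" lb] lbb lb0 e1p b_def by simp
  have P2: "N.prob F2 = b1 / 8" unfolding F2_def
    using noise_t0_m[OF e1p, of "{..-lb}"] lap_le_m[of "4/e1" lb] lbb lb0 e1p b_def by simp
  have P3: "N.prob F3 = b1 / 8" unfolding F3_def
    using noise_nu_m[OF e1p, of "{..-lb}" K] lap_le_m[of "4/e1" lb] lbb lb0 e1p b_def by simp
  have P4: "N.prob (F4 k) = b1 / (16 * (real K + 1))" for k
  proof -
    have "N.prob (F4 k) = exp (- la / b) / 2" unfolding F4_def
      using noise_nu_m[OF e1p, of "{la..}" k] lap_ge_m[of "4/e1" la] la0 e1p b_def by simp
    also have "\<dots> = b1 / (8 * (real K + 1)) / 2" using lab by simp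
    also have "\<dots> = b1 / (16 * (real K + 1))" by simp
    finally show ?thesis .
  qed
  have P5: "N.prob F5 = b1 / 4" unfolding F5_def
    using noise_z_m[OF e1p, of "{..-lz}"] lap_le_m[of "6/e1" lz] lzc lz0 e1p c_def by simp
  have P4U: "N.prob (\<Union>k\<in>{..K}. F4 k) \<le> b1 / 16"
  proof -
    have "N.prob (\<Union>k\<in>{..K}. F4 k) \<le> (\<Sum>k\<in>{..K}. N.prob (F4 k))"
      using F4s by (intro measure_subadditive_finite) (auto simp: N.emeasure_finite)
    also have "\<dots> = (real K + 1) * (b1 / (16 * (real K + 1)))" using P4 by simp
    also have "\<dots> = b1 / 16" by (simp add: field_simps)
    finally show ?thesis .
  qed
  have cover: "space (noiseA e1) - E \<subseteq> F1 \<union> F2 \<union> F3 \<union> (\<Union>k\<in>{..K}. F4 k) \<union> F5"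
    unfolding E_def F1_def F2_def F3_def F4_def F5_def by auto
  have "N.prob (space (noiseA e1) - E) \<le> N.prob (F1 \<union> F2 \<union> F3 \<union> (\<Union>k\<in>{..K}. F4 k) \<union> F5)"
    using cover F1s F2s F3s F4s F5s by (intro N.finite_measure_mono) auto
  also have "\<dots> \<le> N.prob (F1 \<union> F2 \<union> F3 \<union> (\<Union>k\<in>{..K}. F4 k)) + N.prob F5"
    using F1s F2s F3s F4s F5s by (intro measure_subadditive) (auto simp: N.emeasure_finite)
  also have "N.prob (F1 \<union> F2 \<union> F3 \<union> (\<Union>k\<in>{..K}. F4 k)) \<le> N.prob (F1 \<union> F2 \<union> F3) + N.prob (\<Union>k\<in>{..K}. F4 k)"
    using F1s F2s F3s F4s by (intro measure_subadditive) (auto simp: N.emeasure_finite)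
  also have "N.prob (F1 \<union> F2 \<union> F3) \<le> N.prob (F1 \<union> F2) + N.prob F3"
    using F1s F2s F3s by (intro measure_subadditive) (auto simp: N.emeasure_finite)
  also have "N.prob (F1 \<union> F2) \<le> N.prob F1 + N.prob F2"
    using F1s F2s by (intro measure_subadditive) (auto simp: N.emeasure_finite)
  finally have "N.prob (space (noiseA e1) - E) \<le> 11 * b1 / 16"
    using P1 P2 P3 P4U P5 by linarith
  then have PE: "1 - 11 * b1 / 16 \<le> N.prob E" using N.prob_compl[OF Eset] by linarith
  have stepA: "ennreal (1 - \<beta>/3) \<le> emeasure (Medge (Clip G (tau_star G \<epsilon> \<delta> \<beta> \<omega>))
      (\<epsilon> / (6 * tau_star G \<epsilon> \<delta> \<beta> \<omega>)) (\<delta> / (4 * tau_star G \<epsilon> \<delta> \<beta> \<omega>)) (\<beta> / 3))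
      {m. \<bar>m - Q G\<bar> \<le> \<bar>Q G - Q (Clip G (tau_star G \<epsilon> \<delta> \<beta> \<omega>))\<bar> +
            Err (Clip G (tau_star G \<epsilon> \<delta> \<beta> \<omega>)) (\<epsilon> / (6 * tau_star G \<epsilon> \<delta> \<beta> \<omega>))
              (\<delta> / (4 * tau_star G \<epsilon> \<delta> \<beta> \<omega>)) (\<beta> / 3) \<and>
          clipped_at_most G (Clip G (tau_star G \<epsilon> \<delta> \<beta> \<omega>)) Cb}"
    if om_E: "\<omega> \<in> E" for \<omega>
  proof -
    obtain \<nu> t0 z where om: "\<omega> = (\<nu>, t0, z)" by (cases \<omega>) auto
    have t0u: "t0 < lb" and t0l: "-lb < t0" and nuK: "-lb < \<nu> K"
      and nuk: "\<And>k. k \<le> K \<Longrightarrow> \<nu> k < la" and zl: "-lz < z"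
      using om_E unfolding E_def om by auto
    define Tt where "Tt = - (8 / e1) * ln (4 / b1) + t0"
    have Tt_eq: "Tt = - 2 * lb + t0" unfolding Tt_def lb_def b_def by simp
    have condK: "Q_LP G (2 ^ K) + \<nu> K > Tt" using Q0 Tt_eq nuK t0u by simp
    define k where "k = (LEAST k. Q_LP G (2 ^ k) + \<nu> k > Tt)"
    have condk: "Q_LP G (2 ^ k) + \<nu> k > Tt" unfolding k_def using condK by (rule LeastI)
    have kK: "k \<le> K" unfolding k_def using condK by (rule Least_le)
    define \<tau> where "\<tau> = (2::real) ^ k"
    have tau1: "1 \<le> \<tau>" unfolding \<tau>_def by simp
    define q where "q = \<bar>Q_LP G \<tau>\<bar>"
    have qv: "q = - Q_LP G \<tau>" using Q_LP_le0[of \<tau> G] tau1 q_def by simp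
    have q0: "0 \<le> q" using q_def by simp
    have qb: "q < 3 * lb + la" using condk nuk[OF kK] Tt_eq t0l qv unfolding \<tau>_def by linarith
    define t where "t = 3 * \<tau> + 3 * q + z + (6 / e1) * ln (max (1 / d1) (2 / b1)) + 1"
    have teq: "tau_star G \<epsilon> \<delta> \<beta> \<omega> = t"
      unfolding tau_star_def tauA_def Let_def om t_def \<tau>_def q_def k_def Tt_def e1_def b1_def d1_def
      by simp
    have lnmax: "ln (2 / b1) \<le> ln (max (1 / d1) (2 / b1))"
      using b1p d1p by (intro ln_mono) auto
    have tge: "3 * \<tau> + 3 * q + 1 \<le> t"
    proof -
      have "lz \<le> (6 / e1) * ln (max (1 / d1) (2 / b1))"
        unfolding lz_def c_def using lnmax e1p by (intro mult_left_mono) auto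
      then show ?thesis unfolding t_def using zl by linarith
    qed
    have tpos: "0 < t" using tge tau1 q0 by linarith
    have wfC: "wf_graph (Clip G t)" using wf by (rule wf_Clip)
    define S where "S = {v \<in> fst G. t < real (card (edges_at G v))}"
    have cardS: "real (card S) \<le> 3 * q"
      unfolding S_def q_def using lp_clip[OF wf _ ] tge tau1 q_def by simp
    have clip: "clipped_at_most G (Clip G t) Cb"
      unfolding clipped_at_most_def
    proof (intro exI conjI)
      show "S \<subseteq> fst G" unfolding S_def by auto
      show "\<forall>e\<in>snd G - snd (Clip G t). fst e \<in> S \<or> snd e \<in> S"
      proof
        fix e assume e: "e \<in> snd G - snd (Clip G t)"
        have "fst e \<in> fst G" "snd e \<in> fst G" using e wf unfolding wf_graph_def by auto
        then show "fst e \<in> S \<or> snd e \<in> S" using clip_removed[OF wf e] unfolding S_def by auto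
      qed
      show "real (card S) \<le> Cb"
      proof (cases "D \<le> 3")
        case True
        have "S = {}"
        proof -
          have "real (card (edges_at G v)) \<le> 3" if "v \<in> fst G" for v
            using edges_at_le_max_deg[OF wf that] True D_def by simp
          then show ?thesis unfolding S_def using tge tau1 q0 by force
        qed
        then show ?thesis using Cb0 by simp
      next
        case False
        have K1: "1 \<le> K"
        proof (rule ccontr)
          assume "\<not> 1 \<le> K" then have "K = 0" by simp
          then show False using KD False by simp
        qed
        have KD': "(2::real) ^ (K - 1) < real D"
        proof -
          have "\<not> real D \<le> (2::real) ^ (K - 1)" unfolding K_def
            by (rule not_less_Least) (use K1 K_def in simp)
          then show ?thesis by simp
        qed
        have b6: "b = 6 / \<epsilon>" unfolding b_def e1_def by simp
        have lbe: "lb = (6/\<epsilon>) * ln (6/\<beta>)" unfolding lb_def b6 b1_def by simp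
        have lae: "la = (6/\<epsilon>) * ln (12 * (real K + 1) / \<beta>)" 
        proof -
          have "8 * (real K + 1) / b1 = 12 * (real K + 1) / \<beta>" unfolding b1_def using bb by (simp add: field_simps)
          then show ?thesis unfolding la_def b6 by simp
        qed
        have "real (card S) \<le> 3 * (3 * lb + la)" using cardS qb by (smt (verit))
        also have "\<dots> \<le> Cb" unfolding lbe lae Cb_def D_def[symmetric]
          using const_bound[OF eps bb _ K1 KD'] False by simp
        finally show ?thesis .
      qed
    qed
    define M' where "M' = Medge (Clip G t) (\<epsilon> / (6 * t)) (\<delta> / (4 * t)) (\<beta> / 3)"
    have psM: "prob_space M'" and setsM: "sets M' = sets borel" using Mps[rule_format, OF wfC] unfolding M'_def by auto
    have accM: "1 - \<beta>/3 \<le> measure M' {m. \<bar>m - Q (Clip G t)\<bar> \<le> Err (Clip G t) (\<epsilon> / (6 * t)) (\<delta> / (4 * t)) (\<beta> / 3)}"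
      unfolding M'_def using wfC tpos eps dd bb by (intro acc[rule_format]) auto
    define r where "r = \<bar>Q G - Q (Clip G t)\<bar> + Err (Clip G t) (\<epsilon> / (6 * t)) (\<delta> / (4 * t)) (\<beta> / 3)"
    have Bset: "{m. \<bar>m - Q G\<bar> \<le> r \<and> clipped_at_most G (Clip G t) Cb} = {m. \<bar>m - Q G\<bar> \<le> r}"
      using clip by simp
    have Bmeas: "{m::real. \<bar>m - Q G\<bar> \<le> r} \<in> sets M'" unfolding setsM by measurable
    have sub: "{m. \<bar>m - Q (Clip G t)\<bar> \<le> Err (Clip G t) (\<epsilon> / (6 * t)) (\<delta> / (4 * t)) (\<beta> / 3)} \<subseteq> {m. \<bar>m - Q G\<bar> \<le> r}"
      unfolding r_def by auto
    have "1 - \<beta>/3 \<le> measure M' {m. \<bar>m - Q G\<bar> \<le> r}"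
      using accM finite_measure.finite_measure_mono[OF prob_space.axioms(1)[OF psM] sub Bmeas] by linarith
    then have "ennreal (1 - \<beta>/3) \<le> emeasure M' {m. \<bar>m - Q G\<bar> \<le> r}"
      using finite_measure.emeasure_eq_measure[OF prob_space.axioms(1)[OF psM]] by simp
    then show ?thesis unfolding teq M'_def[symmetric] r_def[symmetric] Bset .
  qed
  have b1e: "1 - 11 * b1 / 16 = 1 - 11 * \<beta> / 24" unfolding b1_def by simp
  have fin: "ennreal (1 - \<beta>) \<le> ennreal (1 - \<beta>/3) * ennreal (1 - 11 * \<beta> / 24)"
  proof -
    have "1 - \<beta> \<le> (1 - \<beta>/3) * (1 - 11 * \<beta> / 24)" using bb
      by (simp add: algebra_simps)
    then show ?thesis using bb by (simp add: ennreal_mult[symmetric])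
  qed
  also have "\<dots> \<le> ennreal (1 - \<beta>/3) * emeasure (noiseA e1) E"
    using PE b1e N.emeasure_eq_measure[of E] by (intro mult_left_mono) auto
  also have "\<dots> = (\<integral>\<^sup>+ \<omega>. ennreal (1 - \<beta>/3) * indicator E \<omega> \<partial>noiseA e1)"
    using Eset by (simp add: nn_integral_cmult_indicator)
  also have "\<dots> \<le> n2e_prob Medge G \<epsilon> \<delta> \<beta>
       (\<lambda>Gb t m. \<bar>m - Q G\<bar> \<le> \<bar>Q G - Q Gb\<bar> + Err Gb (\<epsilon> / (6 * t)) (\<delta> / (4 * t)) (\<beta> / 3) \<and>
          clipped_at_most G Gb
            (6000 * ln (ln (max (real (max_deg G)) (exp 1)) / \<beta>) / \<epsilon>))"
    unfolding n2e_prob_def Let_def e1_def[symmetric]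
    using stepA[unfolded Cb_def] by (intro nn_integral_mono) (auto split: split_indicator)
  finally show ?thesis .
qed

theorem mainTheorem10:
  "\<exists>C>0. \<forall>(Q :: ('v::linorder) graph \<Rightarrow> real)
            (Medge :: 'v graph \<Rightarrow> real \<Rightarrow> real \<Rightarrow> real \<Rightarrow> real measure)
            (Err :: 'v graph \<Rightarrow> real \<Rightarrow> real \<Rightarrow> real \<Rightarrow> real)
            (\<epsilon>::real) (\<delta>::real) (\<beta>::real) (G :: 'v graph).
     \<epsilon> > 0 \<and> 0 < \<delta> \<and> \<delta> < 1 \<and> 0 < \<beta> \<and> \<beta> < 1 \<and> wf_graph G \<and>
     (\<forall>H e d b. wf_graph H \<longrightarrow>
        prob_space (Medge H e d b) \<and> sets (Medge H e d b) = sets borel) \<and>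
     (\<forall>H H' e d b S. wf_graph H \<and> wf_graph H' \<and> edge_neighbors H H' \<and> e > 0 \<and> d > 0 \<and>
        S \<in> sets borel \<longrightarrow>
        measure (Medge H e d b) S \<le> exp e * measure (Medge H' e d b) S + d) \<and>
     (\<forall>H e d b. wf_graph H \<and> e > 0 \<and> d > 0 \<and> b > 0 \<longrightarrow>
        measure (Medge H e d b) {m. \<bar>m - Q H\<bar> \<le> Err H e d b} \<ge> 1 - b)
     \<longrightarrow>
     ennreal (1 - \<beta>) \<le> n2e_prob Medge G \<epsilon> \<delta> \<beta>
       (\<lambda>Gb t m. \<bar>m - Q G\<bar> \<le> \<bar>Q G - Q Gb\<bar> + Err Gb (\<epsilon> / (6 * t)) (\<delta> / (4 * t)) (\<beta> / 3) \<and>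
          clipped_at_most G Gb
            (C * ln (ln (max (real (max_deg G)) (exp 1)) / \<beta>) / \<epsilon>))"
    apply (rule exI[of _ "6000"])
  apply (intro conjI allI impI)
   apply simp
  apply (elim conjE)
  apply (rule main_bound)
          apply assumption+
  done

end
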